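(* Let $\mathcal{F}$ be a construction scheme over $\omega_1$ of a good type, let $\mathcal{A}_\mathcal{F}=\langle A_\alpha\rangle_{\alpha<\omega_1}$ be the AD family over $N$ defined below, and let $(X,\leq)$ be an $\omega_1$-like partial order. Then there are a bijection $\psi:X\to\omega_1$ and infinite sets $T_x\subseteq N$ ($x\in X$) such that $(\langle T_x\rangle_{x\in X},\langle A_{\psi(x)}\rangle_{x\in X})$ is an almost disjoint representation of $X$. In particular $\mathcal{A}_\mathcal{F}$ codes every $\omega_1$-like partial order.
   Context: A type is a sequence $\langle m_k,n_{k+1},r_{k+1}\rangle_{k\in\omega}$ of natural numbers with $m_0=1$ and, for all $k$, $n_{k+1}\geq2$, $m_k>r_{k+1}$, $m_{k+1}=r_{k+1}+(m_k-r_{k+1})n_{k+1}$; good if each $r\in\omega$ equals $r_k$ for infinitely many $k\geq1$. A construction scheme of type $\tau$ over a set of ordinals $Y$ is a family $\mathcal{F}$ of nonempty finite subsets of $Y$, cofinal among finite subsets of $Y$ under $\subseteq$, each of size $m_k$ for some $k$, such that with $\mathcal{F}_k=\{F\in\mathcal{F}:|F|=m_k\}$: (i) for $E,F\in\mathcal{F}_k$, $E\cap F$ is an initial segment of both; (ii) every $F\in\mathcal{F}_{k+1}$ equals $F_0\cup\dots\cup F_{n_{k+1}-1}$ with $F_i\in\mathcal{F}_k$ a $\Delta$-system with root $R(F)$, $|R(F)|=r_{k+1}$, $R(F)<F_0\setminus R(F)<\dots<F_{n_{k+1}-1}\setminus R(F)$ ($A<B$: every element of $A$ below every element of $B$). $\rho(\alpha,\beta)=\min\{k:\exists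 F\in\mathcal{F}_k\ \{\alpha,\beta\}\subseteq F\}$; $\lVert\alpha\rVert_k=|\{\xi<\alpha:\rho(\xi,\alpha)\leq k\}|$; for $k\geq1$, $\Xi_\alpha(k)=-1$ if $\alpha\in R(F)$ and $=i$ if $\alpha\in F_i\setminus R(F)$ for any $F\in\mathcal{F}_k$ containing $\alpha$. The family $\mathcal{A}_\mathcal{F}$: for $k\geq1$, $N_k=\{(\sigma,k):\sigma:n_k\to m_{k-1}\}$, $N=\bigcup_{k\geq1}N_k$, $A^k_\alpha=\{(\sigma,k)\in N_k:\Xi_\alpha(k)\geq0,\ \sigma(\Xi_\alpha(k))=\lVert\alpha\rVert_{k-1}\}$, $A_\alpha=\bigcup_{k\geq1}A^k_\alpha$. $A\subseteq^*B$ means $A\setminus B$ finite; $A=^*B$ means both inclusions mod finite. A partial order is $\omega_1$-like if well-founded, of size $\omega_1$, with every $(-\infty,x)$ countable. $\inf(x,y)$ is the greatest lower bound when it exists; $x,y$ incompatible means no $z\leq x,y$; $\mathrm{pred}(x)$ is the set of maximal elements of $(-\infty,x)$ and $x$ is successor-like if $\mathrm{pred}(x)$ is finite and every $y<x$ is $\leq$ some $z\in\mathrm{pred}(x)$. An almost disjoint representation of $X$ is a pair of indexed families $\langle T_x\rangle_{x\in X},\langle A_x\rangle_{x\in X}$ of infinite subsets of a countable set, $x\mapsto A_x$ injective and $\{A_x\}$ almost disjoint, such that: (a) $A_x\subseteq T_x$; (b) $y\not\leq x\Rightarrow A_y\subseteq^*T_y\setminus T_x$; (c) if $\inf(x,y)$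 exists, $T_x\cap T_y=^*T_{\inf(x,y)}$; (d) $x$ successor-like $\Rightarrow T_x\setminus\bigcup_{z\in\mathrm{pred}(x)}T_z=^*A_x$; (e) $x,y$ incompatible $\Rightarrow T_x\cap T_y=^*\emptyset$. *)

theory Defs
  imports Main "HOL-Library.FuncSet" "HOL-Library.Countable_Set"
begin

text \<open>A type is given by three sequences m, n, r; the values n 0 and r 0 are unused.\<close>
definition is_type :: "(nat \<Rightarrow> nat) \<Rightarrow> (nat \<Rightarrow> nat) \<Rightarrow> (nat \<Rightarrow> nat) \<Rightarrow> bool" where
  "is_type m n r \<longleftrightarrow> m 0 = 1 \<and>
     (\<forall>k. n (Suc k) \<ge> 2 \<and> m k > r (Suc k) \<and>
          m (Suc k) = r (Suc k) + (m k - r (Suc k)) * n (Suc k))"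

definition good_type :: "(nat \<Rightarrow> nat) \<Rightarrow> (nat \<Rightarrow> nat) \<Rightarrow> (nat \<Rightarrow> nat) \<Rightarrow> bool" where
  "good_type m n r \<longleftrightarrow> is_type m n r \<and> (\<forall>j. infinite {k. k \<ge> 1 \<and> r k = j})"

definition set_less :: "'a::ord set \<Rightarrow> 'a set \<Rightarrow> bool" where
  "set_less A B \<longleftrightarrow> (\<forall>a\<in>A. \<forall>b\<in>B. a < b)"

definition initial_seg :: "'a::ord set \<Rightarrow> 'a set \<Rightarrow> bool" where
  "initial_seg S E \<longleftrightarrow> S \<subseteq> E \<and> (\<forall>x\<in>S. \<forall>y\<in>E. y < x \<longrightarrow> y \<in> S)"

definition level :: "'a set set \<Rightarrow> (nat \<Rightarrow> nat) \<Rightarrow> nat \<Rightarrow> 'a set set" where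
  "level FF m k = {F \<in> FF. card F = m k}"

definition is_decomp :: "'a::linorder set set \<Rightarrow> (nat \<Rightarrow> nat) \<Rightarrow> (nat \<Rightarrow> nat) \<Rightarrow> (nat \<Rightarrow> nat)
    \<Rightarrow> nat \<Rightarrow> 'a set \<Rightarrow> (nat \<Rightarrow> 'a set) \<Rightarrow> 'a set \<Rightarrow> bool" where
  "is_decomp FF m n r k F Fs R \<longleftrightarrow>
     (\<forall>i<n (Suc k). Fs i \<in> level FF m k) \<and>
     F = (\<Union>i<n (Suc k). Fs i) \<and>
     (\<forall>i<n (Suc k). \<forall>j<n (Suc k). i \<noteq> j \<longrightarrow> Fs i \<inter> Fs j = R) \<and>
     card R = r (Suc k) \<and>
     set_less R (Fs 0 - R) \<and>
     (\<forall>i. Suc i < n (Suc k) \<longrightarrow> set_less (Fs i - R) (Fs (Suc i) - R))"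

definition construction_scheme :: "'a::linorder set set \<Rightarrow> (nat \<Rightarrow> nat) \<Rightarrow> (nat \<Rightarrow> nat) \<Rightarrow> (nat \<Rightarrow> nat) \<Rightarrow> bool" where
  "construction_scheme FF m n r \<longleftrightarrow> is_type m n r \<and>
     (\<forall>F\<in>FF. finite F \<and> F \<noteq> {} \<and> (\<exists>k. card F = m k)) \<and>
     (\<forall>A. finite A \<longrightarrow> (\<exists>F\<in>FF. A \<subseteq> F)) \<and>
     (\<forall>k. \<forall>E\<in>level FF m k. \<forall>F\<in>level FF m k. initial_seg (E \<inter> F) E \<and> initial_seg (E \<inter> F) F) \<and>
     (\<forall>k. \<forall>F\<in>level FF m (Suc k). \<exists>Fs R. is_decomp FF m n r k F Fs R)"

definition rho :: "'a set set \<Rightarrow> (nat \<Rightarrow> nat) \<Rightarrow> 'a \<Rightarrow> 'a \<Rightarrow> nat" where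
  "rho FF m \<alpha> \<beta> = (LEAST k. \<exists>F\<in>level FF m k. \<alpha> \<in> F \<and> \<beta> \<in> F)"

definition normk :: "'a::ord set set \<Rightarrow> (nat \<Rightarrow> nat) \<Rightarrow> nat \<Rightarrow> 'a \<Rightarrow> nat" where
  "normk FF m k \<alpha> = card {\<xi>. \<xi> < \<alpha> \<and> rho FF m \<xi> \<alpha> \<le> k}"

text \<open>Xi alpha k, for k >= 1 (value -1 if alpha is in the root).  Well-definedness
  (independence of the choice of F) is a property of construction schemes.\<close>
definition Xi :: "'a::linorder set set \<Rightarrow> (nat \<Rightarrow> nat) \<Rightarrow> (nat \<Rightarrow> nat) \<Rightarrow> (nat \<Rightarrow> nat) \<Rightarrow> 'a \<Rightarrow> nat \<Rightarrow> int" where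
  "Xi FF m n r \<alpha> k = (SOME i. \<exists>F Fs R. F \<in> level FF m k \<and> \<alpha> \<in> F \<and>
       is_decomp FF m n r (k - 1) F Fs R \<and>
       ((\<alpha> \<in> R \<and> i = -1) \<or> (\<exists>j<n k. \<alpha> \<in> Fs j - R \<and> i = int j)))"

definition NN :: "(nat \<Rightarrow> nat) \<Rightarrow> (nat \<Rightarrow> nat) \<Rightarrow> nat \<Rightarrow> ((nat \<Rightarrow> nat) \<times> nat) set" where
  "NN m n k = {(\<sigma>, k) | \<sigma>. \<sigma> \<in> {..<n k} \<rightarrow>\<^sub>E {..<m (k - 1)}}"

definition NN_all :: "(nat \<Rightarrow> nat) \<Rightarrow> (nat \<Rightarrow> nat) \<Rightarrow> ((nat \<Rightarrow> nat) \<times> nat) set" where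
  "NN_all m n = (\<Union>k\<in>{1..}. NN m n k)"

definition AFk :: "'a::linorder set set \<Rightarrow> (nat \<Rightarrow> nat) \<Rightarrow> (nat \<Rightarrow> nat) \<Rightarrow> (nat \<Rightarrow> nat) \<Rightarrow> nat \<Rightarrow> 'a
    \<Rightarrow> ((nat \<Rightarrow> nat) \<times> nat) set" where
  "AFk FF m n r k \<alpha> = {p \<in> NN m n k. Xi FF m n r \<alpha> k \<ge> 0 \<and>
       fst p (nat (Xi FF m n r \<alpha> k)) = normk FF m (k - 1) \<alpha>}"

definition AF :: "'a::linorder set set \<Rightarrow> (nat \<Rightarrow> nat) \<Rightarrow> (nat \<Rightarrow> nat) \<Rightarrow> (nat \<Rightarrow> nat) \<Rightarrow> 'a
    \<Rightarrow> ((nat \<Rightarrow> nat) \<times> nat) set" where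
  "AF FF m n r \<alpha> = (\<Union>k\<in>{1..}. AFk FF m n r k \<alpha>)"

definition almost_eq :: "'c set \<Rightarrow> 'c set \<Rightarrow> bool" where
  "almost_eq A B \<longleftrightarrow> finite (A - B) \<and> finite (B - A)"

definition is_inf :: "'b::order \<Rightarrow> 'b \<Rightarrow> 'b \<Rightarrow> bool" where
  "is_inf x y z \<longleftrightarrow> z \<le> x \<and> z \<le> y \<and> (\<forall>w. w \<le> x \<and> w \<le> y \<longrightarrow> w \<le> z)"

definition incompatible :: "'b::order \<Rightarrow> 'b \<Rightarrow> bool" where
  "incompatible x y \<longleftrightarrow> \<not> (\<exists>z. z \<le> x \<and> z \<le> y)"

definition pred_set :: "'b::order \<Rightarrow> 'b set" where
  "pred_set x = {y. y < x \<and> \<not> (\<exists>w. w < x \<and> y < w)}"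

definition successor_like :: "'b::order \<Rightarrow> bool" where
  "successor_like x \<longleftrightarrow> finite (pred_set x) \<and> (\<forall>y. y < x \<longrightarrow> (\<exists>z\<in>pred_set x. y \<le> z))"

definition ad_representation :: "'c set \<Rightarrow> ('b::order \<Rightarrow> 'c set) \<Rightarrow> ('b \<Rightarrow> 'c set) \<Rightarrow> bool" where
  "ad_representation G T A \<longleftrightarrow>
     countable G \<and>
     (\<forall>x. T x \<subseteq> G \<and> infinite (T x) \<and> A x \<subseteq> G \<and> infinite (A x)) \<and>
     inj A \<and> (\<forall>x y. x \<noteq> y \<longrightarrow> finite (A x \<inter> A y)) \<and>
     (\<forall>x. A x \<subseteq> T x) \<and>
     (\<forall>x y. \<not> y \<le> x \<longrightarrow> finite (A y - (T y - T x))) \<and>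
     (\<forall>x y z. is_inf x y z \<longrightarrow> almost_eq (T x \<inter> T y) (T z)) \<and>
     (\<forall>x. successor_like x \<longrightarrow> almost_eq (T x - (\<Union>z\<in>pred_set x. T z)) (A x)) \<and>
     (\<forall>x y. incompatible x y \<longrightarrow> finite (T x \<inter> T y))"

end

theory Submission imports Defs begin

locale CS =
  fixes FF :: "'a::linorder set set" and m n r :: "nat \<Rightarrow> nat"
  assumes cs: "construction_scheme FF m n r" and infU: "infinite (UNIV::'a set)"
begin

lemma istyp: "is_type m n r" using cs unfolding construction_scheme_def by blast
lemma n_ge2: "n (Suc k) \<ge> 2" using istyp unfolding is_type_def by blast
lemma r_less: "r (Suc k) < m k" using istyp unfolding is_type_def by blast
lemma m_Suc: "m (Suc k) = r (Suc k) + (m k - r (Suc k)) * n (Suc k)" using istyp unfolding is_type_def by blast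
lemma m_less: "m k < m (Suc k)"
proof -
  have "m k - r (Suc k) > 0" using r_less[of k] by simp
  then have "(m k - r (Suc k)) * n (Suc k) \<ge> (m k - r (Suc k)) * 2" using n_ge2[of k] by simp
  then show ?thesis using m_Suc[of k] r_less[of k] by linarith
qed
lemma sm: "strict_mono m" using m_less strict_mono_Suc_iff by blast

lemma lev: "F \<in> level FF m k \<longleftrightarrow> F \<in> FF \<and> card F = m k" unfolding level_def by simp
lemma FFfin: "F \<in> FF \<Longrightarrow> finite F" using cs unfolding construction_scheme_def by blast
lemma levfin: "F \<in> level FF m k \<Longrightarrow> finite F" using FFfin lev by blast
lemma FFlev: "F \<in> FF \<Longrightarrow> \<exists>k. F \<in> level FF m k"
proof -
  assume F: "F \<in> FF"
  then obtain k where "card F = m k" using cs unfolding construction_scheme_def by meson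
  then show ?thesis using F lev by blast
qed
lemma cofinal: "finite A \<Longrightarrow> \<exists>F\<in>FF. A \<subseteq> F" using cs unfolding construction_scheme_def by blast
lemma iseg: "E \<in> level FF m k \<Longrightarrow> F \<in> level FF m k \<Longrightarrow> initial_seg (E \<inter> F) E"
  using cs unfolding construction_scheme_def by blast
lemma hasdec: "F \<in> level FF m (Suc k) \<Longrightarrow> \<exists>Fs R. is_decomp FF m n r k F Fs R"
  using cs unfolding construction_scheme_def by blast

lemma iseg_below: "E \<in> level FF m k \<Longrightarrow> F \<in> level FF m k \<Longrightarrow> a \<in> E \<Longrightarrow> a \<in> F \<Longrightarrow> x \<in> E \<Longrightarrow> x < a \<Longrightarrow> x \<in> F"
  using iseg[of E k F] unfolding initial_seg_def by blast

section \<open>decompositions\<close>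

context
  fixes k F Fs R
  assumes dec: "is_decomp FF m n r k F Fs R"
begin

lemma d1: "i < n (Suc k) \<Longrightarrow> Fs i \<in> level FF m k" using dec unfolding is_decomp_def by blast
lemma dF: "F = (\<Union>i<n (Suc k). Fs i)" using dec unfolding is_decomp_def by blast
lemma d2: "i < n (Suc k) \<Longrightarrow> Fs i \<subseteq> F" using dF by blast
lemma dint: "i < n (Suc k) \<Longrightarrow> j < n (Suc k) \<Longrightarrow> i \<noteq> j \<Longrightarrow> Fs i \<inter> Fs j = R"
  using dec unfolding is_decomp_def by blast
lemma d3: "i < n (Suc k) \<Longrightarrow> R \<subseteq> Fs i"
proof -
  assume i: "i < n (Suc k)"
  define j where "j = (if i = 0 then 1 else (0::nat))"
  have "j < n (Suc k)" "j \<noteq> i" using n_ge2[of k] i unfolding j_def by auto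
  then show ?thesis using dint[OF i] by blast
qed
lemma dcardR: "card R = r (Suc k)" using dec unfolding is_decomp_def by blast
lemma finR: "finite R"
proof -
  have "0 < n (Suc k)" using n_ge2[of k] by simp
  then show ?thesis using d3[of 0] levfin[OF d1[of 0]] finite_subset by blast
qed
lemma dcases: "x \<in> F \<Longrightarrow> x \<in> R \<or> (\<exists>j<n (Suc k). x \<in> Fs j - R)" using dF by blast
lemma dchain: "j < n (Suc k) \<Longrightarrow> i < j \<Longrightarrow> set_less (Fs i - R) (Fs j - R)"
proof (induction j)
  case 0 then show ?case by simp
next
  case (Suc j)
  have s: "set_less (Fs j - R) (Fs (Suc j) - R)" using dec Suc.prems unfolding is_decomp_def by blast
  show ?case
  proof (cases "i = j")
    case True then show ?thesis using s by simp
  next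
    case False
    then have "set_less (Fs i - R) (Fs j - R)" using Suc by simp
    moreover have "Fs j - R \<noteq> {}"
    proof -
      have "card (Fs j) = m k" using d1[of j] Suc.prems lev by simp
      moreover have "card R = r (Suc k)" by (rule dcardR)
      ultimately have "card R < card (Fs j)" using r_less[of k] by simp
      then show ?thesis using finR by (metis Diff_eq_empty_iff card_mono levfin d1 Suc.prems Suc_lessD leD)
    qed
    then obtain z where z: "z \<in> Fs j - R" by blast
    show ?thesis unfolding set_less_def
    proof (intro ballI)
      fix a b assume "a \<in> Fs i - R" "b \<in> Fs (Suc j) - R"
      then have "a < z" "z < b" using s z \<open>set_less (Fs i - R) (Fs j - R)\<close> unfolding set_less_def by auto
      then show "a < b" by simp
    qed
  qed
qed
lemma dcard_blk: "i < n (Suc k) \<Longrightarrow> card (Fs i - R) = m k - r (Suc k)"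
  using d3 d1 lev dcardR finR by (simp add: card_Diff_subset)
lemma d_nonempty: "i < n (Suc k) \<Longrightarrow> Fs i - R \<noteq> {}"
proof -
  assume "i < n (Suc k)"
  then have "card (Fs i - R) > 0" using dcard_blk r_less[of k] by simp
  then show ?thesis by force
qed
lemma dR: "i < n (Suc k) \<Longrightarrow> x \<in> R \<Longrightarrow> y \<in> Fs i - R \<Longrightarrow> x < y"
proof -
  assume i: "i < n (Suc k)" and x: "x \<in> R" and y: "y \<in> Fs i - R"
  have s0: "set_less R (Fs 0 - R)" using dec unfolding is_decomp_def by blast
  show "x < y"
  proof (cases "i = 0")
    case True then show ?thesis using s0 x y unfolding set_less_def by blast
  next
    case False
    obtain z where z: "z \<in> Fs 0 - R" using d_nonempty[of 0] i by auto
    have "set_less (Fs 0 - R) (Fs i - R)" using dchain[OF i] False by simp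
    then show ?thesis using s0 x y z unfolding set_less_def by (meson order.strict_trans)
  qed
qed

lemma pos_R: "a \<in> R \<Longrightarrow> card {x\<in>F. x < a} < r (Suc k)"
proof -
  assume a: "a \<in> R"
  have "{x\<in>F. x < a} \<subseteq> R - {a}"
  proof
    fix x assume x: "x \<in> {x\<in>F. x < a}"
    have "x \<in> R"
    proof (rule ccontr)
      assume "x \<notin> R"
      then obtain j where "j < n (Suc k)" "x \<in> Fs j - R" using dcases x by blast
      then have "a < x" using dR a by blast
      then show False using x by auto
    qed
    then show "x \<in> R - {a}" using x by auto
  qed
  then have "card {x\<in>F. x < a} \<le> card (R - {a})" using finR by (simp add: card_mono)
  also have "\<dots> < card R" using a finR by (meson card_Diff1_less)
  finally show ?thesis using dcardR by simp
qed

lemma pos_blk: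
  assumes j: "j < n (Suc k)" and a: "a \<in> Fs j - R"
  shows "r (Suc k) + j * (m k - r (Suc k)) \<le> card {x\<in>F. x < a}"
    "card {x\<in>F. x < a} < r (Suc k) + Suc j * (m k - r (Suc k))"
proof -
  define d where "d = m k - r (Suc k)"
  define C where "C = {x\<in>Fs j - R. x < a}"
  have eq: "{x\<in>F. x < a} = R \<union> (\<Union>i<j. Fs i - R) \<union> C"
  proof
    show "{x\<in>F. x < a} \<subseteq> R \<union> (\<Union>i<j. Fs i - R) \<union> C"
    proof
      fix x assume x: "x \<in> {x\<in>F. x < a}"
      show "x \<in> R \<union> (\<Union>i<j. Fs i - R) \<union> C"
      proof (cases "x \<in> R")
        case False
        then obtain i where i: "i < n (Suc k)" "x \<in> Fs i - R" using dcases x by blast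
        have "\<not> j < i"
        proof
          assume "j < i"
          then have "a < x" using dchain[OF i(1)] a i(2) unfolding set_less_def by blast
          then show False using x by auto
        qed
        then have "i < j \<or> i = j" by auto
        then show ?thesis using i x unfolding C_def by auto
      qed simp
    qed
    show "R \<union> (\<Union>i<j. Fs i - R) \<union> C \<subseteq> {x\<in>F. x < a}"
    proof -
      have "R \<subseteq> {x\<in>F. x < a}" using dR[OF j] a d3[OF j] d2[OF j] by blast
      moreover have "(\<Union>i<j. Fs i - R) \<subseteq> {x\<in>F. x < a}"
      proof (clarsimp)
        fix i x assume "i < j" "x \<in> Fs i" "x \<notin> R"
        then show "x \<in> F \<and> x < a" using dchain[OF j, of i] a d2[of i] j unfolding set_less_def by auto
      qed
      moreover have "C \<subseteq> {x\<in>F. x < a}" using d2[OF j] unfolding C_def by blast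
      ultimately show ?thesis by blast
    qed
  qed
  have finB: "\<And>i. i < n (Suc k) \<Longrightarrow> finite (Fs i - R)" using d1 levfin by blast
  have cU: "card (\<Union>i<j. Fs i - R) = j * d"
  proof -
    have "card (\<Union>i<j. Fs i - R) = (\<Sum>i<j. card (Fs i - R))"
    proof (rule card_UN_disjoint)
      show "finite {..<j}" by simp
      show "\<forall>i\<in>{..<j}. finite (Fs i - R)" using finB j by auto
      show "\<forall>i\<in>{..<j}. \<forall>ia\<in>{..<j}. i \<noteq> ia \<longrightarrow> (Fs i - R) \<inter> (Fs ia - R) = {}"
      proof (intro ballI impI)
        fix i ia assume "i \<in> {..<j}" "ia \<in> {..<j}" "i \<noteq> ia"
        then have "Fs i \<inter> Fs ia = R" using dint j by auto
        then show "(Fs i - R) \<inter> (Fs ia - R) = {}" by blast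
      qed
    qed
    also have "\<dots> = (\<Sum>i<j. d)" using dcard_blk j unfolding d_def by simp
    finally show ?thesis by simp
  qed
  have finU: "finite (\<Union>i<j. Fs i - R)"
  proof (rule finite_UN_I)
    show "finite {..<j}" by simp
    show "\<And>i. i \<in> {..<j} \<Longrightarrow> finite (Fs i - R)" using finB j by auto
  qed
  have finC: "finite C" using finB[OF j] unfolding C_def by (rule finite_subset[rotated]) auto
  have cC: "card C < d"
  proof -
    have "C \<subset> Fs j - R" using a unfolding C_def by auto
    then have "card C < card (Fs j - R)" using finB[OF j] by (simp add: psubset_card_mono)
    then show ?thesis using dcard_blk[OF j] unfolding d_def by simp
  qed
  have disj1: "R \<inter> (\<Union>i<j. Fs i - R) = {}" by blast
  have disj2: "(R \<union> (\<Union>i<j. Fs i - R)) \<inter> C = {}"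
  proof -
    have "R \<inter> C = {}" unfolding C_def by blast
    moreover have "(\<Union>i<j. Fs i - R) \<inter> C = {}"
    proof -
      have "\<And>i. i < j \<Longrightarrow> Fs i \<inter> Fs j = R" using dint j by simp
      then show ?thesis unfolding C_def by blast
    qed
    ultimately show ?thesis by blast
  qed
  have "card {x\<in>F. x < a} = card R + j * d + card C"
  proof -
    have "card (R \<union> (\<Union>i<j. Fs i - R)) = card R + card (\<Union>i<j. Fs i - R)"
      by (rule card_Un_disjoint[OF finR finU disj1])
    moreover have "card ((R \<union> (\<Union>i<j. Fs i - R)) \<union> C) = card (R \<union> (\<Union>i<j. Fs i - R)) + card C"
      by (rule card_Un_disjoint) (use finR finU finC disj2 in auto)
    ultimately show ?thesis unfolding eq using cU by simp
  qed
  then show "r (Suc k) + j * (m k - r (Suc k)) \<le> card {x\<in>F. x < a}"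
    "card {x\<in>F. x < a} < r (Suc k) + Suc j * (m k - r (Suc k))"
    using cC dcardR unfolding d_def by auto
qed

end


section \<open>levels and rho\<close>

lemma descend1: "F \<in> level FF m (Suc k) \<Longrightarrow> a \<in> F \<Longrightarrow> \<exists>E\<in>level FF m k. a \<in> E \<and> E \<subseteq> F"
proof -
  assume F: "F \<in> level FF m (Suc k)" and a: "a \<in> F"
  obtain Fs R where dec: "is_decomp FF m n r k F Fs R" using hasdec[OF F] by blast
  have n0: "0 < n (Suc k)" using n_ge2[of k] by simp
  from dcases[OF dec a] obtain j where j: "j < n (Suc k)" "a \<in> Fs j"
    using d3[OF dec n0] n0 by blast
  then show ?thesis using d1[OF dec j(1)] d2[OF dec j(1)] by blast
qed

lemma descend: "j \<le> k \<Longrightarrow> F \<in> level FF m k \<Longrightarrow> a \<in> F \<Longrightarrow> \<exists>E\<in>level FF m j. a \<in> E \<and> E \<subseteq> F"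
proof (induction k arbitrary: F)
  case 0 then show ?case by blast
next
  case (Suc k)
  show ?case
  proof (cases "j = Suc k")
    case True then show ?thesis using Suc.prems by blast
  next
    case False
    then have "j \<le> k" using Suc.prems by simp
    obtain E1 where E1: "E1 \<in> level FF m k" "a \<in> E1" "E1 \<subseteq> F" using descend1 Suc.prems by blast
    obtain E where "E \<in> level FF m j" "a \<in> E" "E \<subseteq> E1" using Suc.IH[OF \<open>j \<le> k\<close> E1(1) E1(2)] by blast
    then show ?thesis using E1 by blast
  qed
qed

lemma exists_level: "\<exists>F\<in>level FF m k. a \<in> F"
proof -
  obtain B :: "'a set" where B: "finite B" "card B = m k" using infinite_arbitrarily_large[OF infU] by blast
  obtain F where F: "F \<in> FF" "insert a B \<subseteq> F" using cofinal[of "insert a B"] B by blast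
  obtain k' where k': "F \<in> level FF m k'" using FFlev[OF F(1)] by blast
  have "card B \<le> card F" using F(2) levfin[OF k'] by (meson card_mono subset_insertI2 subset_refl order_trans)
  then have "m k \<le> m k'" using B k' lev by simp
  then have "k \<le> k'" using sm strict_mono_less_eq by blast
  then show ?thesis using descend[OF _ k', of k a] F(2) by blast
qed

lemma lift: "j \<le> k \<Longrightarrow> E \<in> level FF m j \<Longrightarrow> F \<in> level FF m k \<Longrightarrow> a \<in> E \<Longrightarrow> a \<in> F \<Longrightarrow> x \<in> E \<Longrightarrow> x < a \<Longrightarrow> x \<in> F"
proof -
  assume jk: "j \<le> k" and E: "E \<in> level FF m j" and F: "F \<in> level FF m k" and a: "a \<in> E" "a \<in> F"
    and x: "x \<in> E" "x < a"
  obtain E' where E': "E' \<in> level FF m j" "a \<in> E'" "E' \<subseteq> F" using descend[OF jk F a(2)] by blast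
  have "x \<in> E'" using iseg_below[OF E E'(1) a(1) E'(2) x] .
  then show "x \<in> F" using E'(3) by blast
qed

abbreviation \<rho> where "\<rho> \<equiv> rho FF m"

lemma rho_ex: "\<exists>k. \<exists>F\<in>level FF m k. x \<in> F \<and> y \<in> F"
proof -
  obtain F where F: "F \<in> FF" "{x, y} \<subseteq> F" using cofinal[of "{x,y}"] by auto
  then show ?thesis using FFlev[OF F(1)] by blast
qed

lemma rho_le_iff: "\<rho> x y \<le> k \<longleftrightarrow> (\<exists>F\<in>level FF m k. x \<in> F \<and> y \<in> F)"
proof
  assume "\<exists>F\<in>level FF m k. x \<in> F \<and> y \<in> F"
  then show "\<rho> x y \<le> k" unfolding rho_def by (rule Least_le)
next
  assume le: "\<rho> x y \<le> k"
  obtain F0 where F0: "F0 \<in> level FF m (\<rho> x y)" "x \<in> F0" "y \<in> F0"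
    using LeastI_ex[OF rho_ex[of x y]] unfolding rho_def by blast
  consider "x = y" | "x < y" | "y < x" by fastforce
  then show "\<exists>F\<in>level FF m k. x \<in> F \<and> y \<in> F"
  proof cases
    case 1 then show ?thesis using exists_level by blast
  next
    case 2
    obtain F where F: "F \<in> level FF m k" "y \<in> F" using exists_level by blast
    have "x \<in> F" using lift[OF le F0(1) F(1) F0(3) F(2) F0(2) 2] .
    then show ?thesis using F by blast
  next
    case 3
    obtain F where F: "F \<in> level FF m k" "x \<in> F" using exists_level by blast
    have "y \<in> F" using lift[OF le F0(1) F(1) F0(2) F(2) F0(3) 3] .
    then show ?thesis using F by blast
  qed
qed

lemma rho_sym: "\<rho> x y = \<rho> y x"
  unfolding rho_def by (metis (no_types, lifting))

lemma rho_refl: "\<rho> x x = 0"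
  using rho_le_iff[of x x 0] exists_level by auto

lemma ultra_aux: "x \<le> c \<Longrightarrow> \<rho> x y \<le> max (\<rho> x c) (\<rho> y c)"
proof -
  assume xc: "x \<le> c"
  define k where "k = max (\<rho> x c) (\<rho> y c)"
  obtain E where E: "E \<in> level FF m k" "x \<in> E" "c \<in> E" using rho_le_iff[of x c k] unfolding k_def by auto
  obtain F where F: "F \<in> level FF m k" "y \<in> F" "c \<in> F" using rho_le_iff[of y c k] unfolding k_def by auto
  have "x \<in> F"
  proof (cases "x = c")
    case True then show ?thesis using F by simp
  next
    case False
    then have "x < c" using xc by simp
    then show ?thesis using iseg_below[OF E(1) F(1) E(3) F(3) E(2)] by blast
  qed
  then show ?thesis using rho_le_iff[of x y k] F unfolding k_def by blast
qed

lemma ultra: "min x y \<le> c \<Longrightarrow> \<rho> x y \<le> max (\<rho> x c) (\<rho> y c)"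
proof -
  assume "min x y \<le> c"
  then consider "x \<le> c" | "y \<le> c" by (metis min_le_iff_disj)
  then show ?thesis
  proof cases
    case 1 then show ?thesis by (rule ultra_aux)
  next
    case 2 then show ?thesis using ultra_aux[of y c x] rho_sym[of x y] by (simp add: max.commute)
  qed
qed

lemma below_sub: "F \<in> level FF m k \<Longrightarrow> c \<in> F \<Longrightarrow> {x. x \<le> c \<and> \<rho> x c \<le> k} \<subseteq> F"
proof
  fix x assume F: "F \<in> level FF m k" "c \<in> F" and x: "x \<in> {x. x \<le> c \<and> \<rho> x c \<le> k}"
  obtain G where G: "G \<in> level FF m k" "x \<in> G" "c \<in> G" using x rho_le_iff by blast
  show "x \<in> F"
  proof (cases "x = c")
    case True then show ?thesis using F by simp
  next
    case False
    then show ?thesis using x iseg_below[OF G(1) F(1) G(3) F(2) G(2)] by auto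
  qed
qed

lemma rho_fin: "finite {x. x \<le> c \<and> \<rho> x c \<le> k}"
proof -
  obtain F where F: "F \<in> level FF m k" "c \<in> F" using exists_level by blast
  show ?thesis using below_sub[OF F] levfin[OF F(1)] finite_subset by blast
qed

lemma normk_eq: "F \<in> level FF m k \<Longrightarrow> a \<in> F \<Longrightarrow> {\<xi>. \<xi> < a \<and> \<rho> \<xi> a \<le> k} = {x\<in>F. x < a}"
proof
  assume F: "F \<in> level FF m k" "a \<in> F"
  show "{\<xi>. \<xi> < a \<and> \<rho> \<xi> a \<le> k} \<subseteq> {x\<in>F. x < a}"
    using below_sub[OF F] by auto
  show "{x\<in>F. x < a} \<subseteq> {\<xi>. \<xi> < a \<and> \<rho> \<xi> a \<le> k}"
    using rho_le_iff F by blast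
qed

lemma normk_card: "F \<in> level FF m k \<Longrightarrow> a \<in> F \<Longrightarrow> normk FF m k a = card {x\<in>F. x < a}"
  unfolding normk_def using normk_eq by simp

lemma normk_less: "normk FF m k a < m k"
proof -
  obtain F where F: "F \<in> level FF m k" "a \<in> F" using exists_level by blast
  have "{x\<in>F. x < a} \<subset> F" using F(2) by auto
  then have "card {x\<in>F. x < a} < card F" using levfin[OF F(1)] by (simp add: psubset_card_mono)
  then show ?thesis using normk_card[OF F] F(1) lev by simp
qed

section \<open>Xi\<close>

definition XiP where
  "XiP a k i \<longleftrightarrow> (\<exists>F Fs R. F \<in> level FF m k \<and> a \<in> F \<and>
       is_decomp FF m n r (k - 1) F Fs R \<and>
       ((a \<in> R \<and> i = -1) \<or> (\<exists>j<n k. a \<in> Fs j - R \<and> i = int j)))"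

lemma Xi_some: "Xi FF m n r a k = (SOME i. XiP a k i)"
  unfolding Xi_def XiP_def by simp

lemma XiP_unique:
  assumes "XiP a (Suc k) i"
  shows "i = (if normk FF m (Suc k) a < r (Suc k) then -1
              else int ((normk FF m (Suc k) a - r (Suc k)) div (m k - r (Suc k))))"
proof -
  obtain F Fs R where F: "F \<in> level FF m (Suc k)" "a \<in> F" and dec: "is_decomp FF m n r k F Fs R"
    and c: "(a \<in> R \<and> i = -1) \<or> (\<exists>j<n (Suc k). a \<in> Fs j - R \<and> i = int j)"
    using assms unfolding XiP_def by auto
  have P: "normk FF m (Suc k) a = card {x\<in>F. x < a}" using normk_card[OF F] .
  from c show ?thesis
  proof
    assume "a \<in> R \<and> i = -1"
    then show ?thesis using pos_R[OF dec] P by simp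
  next
    assume "\<exists>j<n (Suc k). a \<in> Fs j - R \<and> i = int j"
    then obtain j where j: "j < n (Suc k)" "a \<in> Fs j - R" "i = int j" by blast
    define d where "d = m k - r (Suc k)"
    have b1: "r (Suc k) + j * d \<le> card {x\<in>F. x < a}" and b2: "card {x\<in>F. x < a} < r (Suc k) + Suc j * d"
      using pos_blk[OF dec j(1,2)] unfolding d_def by auto
    have "(card {x\<in>F. x < a} - r (Suc k)) div d = j"
      by (rule div_nat_eqI) (use b1 b2 in \<open>auto simp: mult.commute\<close>)
    then show ?thesis using b1 P j(3) unfolding d_def by auto
  qed
qed

lemma XiP_ex: "\<exists>i. XiP a (Suc k) i"
proof -
  obtain F where F: "F \<in> level FF m (Suc k)" "a \<in> F" using exists_level by blast
  obtain Fs R where dec: "is_decomp FF m n r k F Fs R" using hasdec[OF F(1)] by blast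
  show ?thesis using dcases[OF dec F(2)] F dec unfolding XiP_def by fastforce
qed

lemma Xi_XiP: "XiP a (Suc k) (Xi FF m n r a (Suc k))"
  unfolding Xi_some using XiP_ex someI_ex by metis

lemma Xi_eq: "XiP a (Suc k) i \<Longrightarrow> Xi FF m n r a (Suc k) = i"
  using XiP_unique Xi_XiP by metis

lemma Xi_nonneg:
  assumes "Xi FF m n r a (Suc k) \<ge> 0"
  shows "\<exists>j<n (Suc k). Xi FF m n r a (Suc k) = int j"
  using Xi_XiP[of a k] assms unfolding XiP_def by auto


section \<open>The family\<close>

abbreviation AA where "AA \<equiv> AF FF m n r"

lemma NN_snd: assumes "p \<in> NN m n k" shows "snd p = k"
proof -
  from assms obtain \<sigma> where "p = (\<sigma>, k)" unfolding NN_def by blast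
  then show ?thesis by simp
qed

lemma NN_fin: "finite (NN m n k)"
proof -
  have "NN m n k = (\<lambda>\<sigma>. (\<sigma>, k)) ` ({..<n k} \<rightarrow>\<^sub>E {..<m (k - 1)})"
    unfolding NN_def by auto
  then show ?thesis by (simp add: finite_PiE)
qed

lemma NN_all_count: "countable (NN_all m n)"
  unfolding NN_all_def using NN_fin by (intro countable_UN) (auto intro: countable_finite)

lemma AF_sub: "AA a \<subseteq> NN_all m n"
  unfolding AF_def AFk_def NN_all_def by auto

lemma AF_mem: "p \<in> AA a \<Longrightarrow> snd p \<ge> 1 \<and> p \<in> AFk FF m n r (snd p) a"
  unfolding AF_def AFk_def using NN_snd by fastforce

lemma AF_level_fin: "finite (AA a \<inter> {p. snd p \<le> K})"
proof -
  have "AA a \<inter> {p. snd p \<le> K} \<subseteq> (\<Union>k\<le>K. NN m n k)"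
    using AF_mem unfolding AFk_def by fastforce
  moreover have "finite (\<Union>k\<le>K. NN m n k)" using NN_fin by simp
  ultimately show ?thesis using finite_subset by blast
qed

lemma AD_aux:
  assumes ab: "a < b" and pa: "p \<in> AA a" and pb: "p \<in> AA b"
  shows "snd p \<le> \<rho> a b"
proof (rule ccontr)
  assume "\<not> snd p \<le> \<rho> a b"
  then have lt: "\<rho> a b < snd p" by simp
  obtain k where k: "snd p = Suc k" using AF_mem[OF pa] by (cases "snd p") auto
  have pa': "p \<in> AFk FF m n r (Suc k) a" and pb': "p \<in> AFk FF m n r (Suc k) b"
    using AF_mem[OF pa] AF_mem[OF pb] k by auto
  have lek: "\<rho> a b \<le> k" using lt k by simp
  obtain F where F: "F \<in> level FF m (Suc k)" "a \<in> F" "b \<in> F" using rho_le_iff[of a b "Suc k"] lek by auto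
  obtain E where E: "E \<in> level FF m k" "a \<in> E" "b \<in> E" using rho_le_iff[of a b k] lek by auto
  obtain Fs R where dec: "is_decomp FF m n r k F Fs R" using hasdec[OF F(1)] by blast
  have n0: "0 < n (Suc k)" using n_ge2[of k] by simp
  obtain i where i: "i < n (Suc k)" "b \<in> Fs i"
    using dcases[OF dec F(3)] d3[OF dec n0] n0 by blast
  have ai: "a \<in> Fs i" using iseg_below[OF E(1) d1[OF dec i(1)] E(3) i(2) E(2) ab] .
  have xa: "Xi FF m n r a (Suc k) \<ge> 0" and xb: "Xi FF m n r b (Suc k) \<ge> 0"
    using pa' pb' unfolding AFk_def by auto
  have bR: "b \<notin> R"
  proof
    assume "b \<in> R"
    then have "XiP b (Suc k) (-1)" unfolding XiP_def using F dec by auto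
    then show False using Xi_eq xb by fastforce
  qed
  have aR: "a \<notin> R"
  proof
    assume "a \<in> R"
    then have "XiP a (Suc k) (-1)" unfolding XiP_def using F dec by auto
    then show False using Xi_eq xa by fastforce
  qed
  have "XiP b (Suc k) (int i)" unfolding XiP_def using F dec i bR by auto
  then have xbi: "Xi FF m n r b (Suc k) = int i" by (rule Xi_eq)
  have "XiP a (Suc k) (int i)" unfolding XiP_def using F dec i ai aR by auto
  then have xai: "Xi FF m n r a (Suc k) = int i" by (rule Xi_eq)
  have "fst p i = normk FF m k a" "fst p i = normk FF m k b"
    using pa' pb' xai xbi unfolding AFk_def by auto
  moreover have "normk FF m k a < normk FF m k b"
  proof -
    have Fi: "Fs i \<in> level FF m k" using d1[OF dec i(1)] .
    have "{x\<in>Fs i. x < a} \<subset> {x\<in>Fs i. x < b}" using ai ab by auto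
    then have "card {x\<in>Fs i. x < a} < card {x\<in>Fs i. x < b}"
      using levfin[OF Fi] by (intro psubset_card_mono) auto
    then show ?thesis using normk_card[OF Fi ai] normk_card[OF Fi i(2)] by simp
  qed
  ultimately show False by simp
qed

lemma AD_level: "a \<noteq> b \<Longrightarrow> p \<in> AA a \<Longrightarrow> p \<in> AA b \<Longrightarrow> snd p \<le> \<rho> a b"
proof -
  assume "a \<noteq> b" "p \<in> AA a" "p \<in> AA b"
  then consider "a < b" | "b < a" by fastforce
  then show ?thesis
  proof cases
    case 1 then show ?thesis using AD_aux \<open>p \<in> AA a\<close> \<open>p \<in> AA b\<close> by blast
  next
    case 2 then show ?thesis using AD_aux \<open>p \<in> AA a\<close> \<open>p \<in> AA b\<close> rho_sym by metis
  qed
qed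

lemma AD: "a \<noteq> b \<Longrightarrow> finite (AA a \<inter> AA b)"
proof -
  assume ab: "a \<noteq> b"
  have "AA a \<inter> AA b \<subseteq> AA a \<inter> {p. snd p \<le> \<rho> a b}" using AD_level[OF ab] by blast
  then show ?thesis using AF_level_fin finite_subset by blast
qed

lemma AF_inf:
  assumes good: "good_type m n r"
  shows "infinite (AA a)"
proof
  assume fin: "finite (AA a)"
  have "{k. k \<ge> 1 \<and> r k = 0} \<subseteq> snd ` AA a"
  proof
    fix k assume "k \<in> {k. k \<ge> 1 \<and> r k = 0}"
    then obtain k0 where k0: "k = Suc k0" "r (Suc k0) = 0" by (cases k) auto
    obtain i where xi: "XiP a (Suc k0) i" using XiP_ex by blast
    then obtain F Fs R where F: "F \<in> level FF m (Suc k0)" "a \<in> F" and dec: "is_decomp FF m n r k0 F Fs R"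
      and c: "(a \<in> R \<and> i = -1) \<or> (\<exists>j<n (Suc k0). a \<in> Fs j - R \<and> i = int j)"
      unfolding XiP_def by auto
    have "R = {}" using dcardR[OF dec] finR[OF dec] k0(2) by simp
    then obtain j where j: "j < n (Suc k0)" "i = int j" using c by auto
    have X: "Xi FF m n r a (Suc k0) = int j" using Xi_eq[OF xi] j by simp
    define \<sigma> where "\<sigma> = (\<lambda>x. if x < n (Suc k0) then (if x = j then normk FF m k0 a else 0) else undefined)"
    have m0: "0 < m k0" using r_less[of k0] by simp
    have "\<sigma> \<in> {..<n (Suc k0)} \<rightarrow>\<^sub>E {..<m k0}"
      unfolding \<sigma>_def using normk_less[of k0 a] m0 by (auto simp: PiE_def extensional_def)
    then have "(\<sigma>, Suc k0) \<in> NN m n (Suc k0)" unfolding NN_def by auto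
    moreover have "\<sigma> j = normk FF m k0 a" unfolding \<sigma>_def using j by simp
    ultimately have "(\<sigma>, Suc k0) \<in> AFk FF m n r (Suc k0) a" unfolding AFk_def using X by simp
    then have "(\<sigma>, Suc k0) \<in> AA a" unfolding AF_def by auto
    then show "k \<in> snd ` AA a" using k0 by force
  qed
  moreover have "infinite {k. k \<ge> 1 \<and> r k = 0}" using good unfolding good_type_def by blast
  ultimately show False using fin finite_subset by blast
qed


section \<open>Trimmed unions\<close>

definition Lo where "Lo a g = {p \<in> AA a. \<rho> a g < snd p}"
definition TT where "TT U g = (\<Union>a\<in>U. Lo a g)"

lemma Lo_sub: "Lo a g \<subseteq> AA a" unfolding Lo_def by blast

lemma AF_Lo: "finite (AA a - Lo a g)"
proof -
  have "AA a - Lo a g \<subseteq> AA a \<inter> {p. snd p \<le> \<rho> a g}" unfolding Lo_def by auto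
  then show ?thesis using AF_level_fin finite_subset by blast
qed

lemma TT_sub: "TT U g \<subseteq> NN_all m n" unfolding TT_def Lo_def using AF_sub by blast

lemma TT_S:
  assumes U: "\<forall>a\<in>U. a \<le> g" and UW: "U \<subseteq> W"
  shows "finite (TT U g - TT W g')"
proof -
  define c where "c = \<rho> g g'"
  define I where "I = {a. a \<le> g \<and> \<rho> a g \<le> c}"
  have "TT U g - TT W g' \<subseteq> (\<Union>a\<in>I. AA a \<inter> {p. snd p \<le> c})"
  proof
    fix p assume "p \<in> TT U g - TT W g'"
    then obtain a where a: "a \<in> U" "p \<in> Lo a g" "p \<notin> Lo a g'" using UW unfolding TT_def by blast
    have pa: "p \<in> AA a" "\<rho> a g < snd p" "snd p \<le> \<rho> a g'" using a(2,3) unfolding Lo_def by auto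
    have "min a g' \<le> g" using U a(1) by (simp add: min.coboundedI1)
    then have "\<rho> a g' \<le> max (\<rho> a g) (\<rho> g' g)" by (rule ultra)
    then have "\<rho> a g' \<le> c" using pa rho_sym[of g' g] unfolding c_def by linarith
    then have "a \<in> I" "snd p \<le> c" using pa U a(1) unfolding I_def by auto
    then show "p \<in> (\<Union>a\<in>I. AA a \<inter> {p. snd p \<le> c})" using pa by blast
  qed
  moreover have "finite (\<Union>a\<in>I. AA a \<inter> {p. snd p \<le> c})"
    using rho_fin AF_level_fin unfolding I_def by blast
  ultimately show ?thesis using finite_subset by blast
qed

lemma TT_P:
  assumes U: "\<forall>a\<in>U. a \<le> g" and V: "\<forall>b\<in>V. b \<le> g'"
  shows "finite (TT U g \<inter> TT V g' - TT (U \<inter> V) g)"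
proof -
  define c where "c = \<rho> g g'"
  define I where "I = {a. a \<le> g \<and> \<rho> a g \<le> c} \<times> {b. b \<le> g' \<and> \<rho> b g' \<le> c}"
  define J where "J = {ab \<in> I. fst ab \<noteq> snd ab}"
  have "TT U g \<inter> TT V g' - TT (U \<inter> V) g \<subseteq> (\<Union>ab\<in>J. AA (fst ab) \<inter> AA (snd ab))"
  proof
    fix p assume p: "p \<in> TT U g \<inter> TT V g' - TT (U \<inter> V) g"
    then obtain a b where ab: "a \<in> U" "b \<in> V" "p \<in> Lo a g" "p \<in> Lo b g'" unfolding TT_def by blast
    have "a \<noteq> b" using ab p unfolding TT_def by blast
    have pa: "p \<in> AA a" "\<rho> a g < snd p" using ab(3) unfolding Lo_def by auto
    have pb: "p \<in> AA b" "\<rho> b g' < snd p" using ab(4) unfolding Lo_def by auto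
    have s: "snd p \<le> \<rho> a b" using AD_level[OF \<open>a \<noteq> b\<close> pa(1) pb(1)] .
    have "min a b \<le> g" using U ab(1) by (simp add: min.coboundedI1)
    then have "\<rho> a b \<le> max (\<rho> a g) (\<rho> b g)" by (rule ultra)
    then have u1: "\<rho> a b \<le> \<rho> b g" using pa s by linarith
    have "min b g \<le> g'" using V ab(2) by (simp add: min.coboundedI1)
    then have "\<rho> b g \<le> max (\<rho> b g') (\<rho> g g')" by (rule ultra)
    then have u2: "\<rho> b g \<le> c" using pb s u1 unfolding c_def by linarith
    have "(a, b) \<in> J" unfolding J_def I_def using U V ab(1,2) \<open>a \<noteq> b\<close> pa pb s u1 u2 by auto
    then show "p \<in> (\<Union>ab\<in>J. AA (fst ab) \<inter> AA (snd ab))" using pa pb by force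
  qed
  moreover have "finite (\<Union>ab\<in>J. AA (fst ab) \<inter> AA (snd ab))"
  proof (rule finite_UN_I)
    show "finite J" unfolding J_def I_def using rho_fin by auto
    show "\<And>ab. ab \<in> J \<Longrightarrow> finite (AA (fst ab) \<inter> AA (snd ab))" unfolding J_def using AD by blast
  qed
  ultimately show ?thesis using finite_subset by blast
qed

lemma TT_B:
  assumes U: "\<forall>a\<in>U. a \<le> g" and b: "b \<notin> U"
  shows "finite (AA b \<inter> TT U g)"
proof -
  have "TT {b} b = AA b" unfolding TT_def Lo_def using rho_refl AF_mem by fastforce
  moreover have "TT (U \<inter> {b}) g = {}" using b unfolding TT_def by auto
  moreover have "finite (TT U g \<inter> TT {b} b - TT (U \<inter> {b}) g)" by (rule TT_P) (use U in auto)
  ultimately show ?thesis by (simp add: Int_commute)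
qed

lemma TT_mono: "U \<subseteq> W \<Longrightarrow> TT U g \<subseteq> TT W g" unfolding TT_def by blast


lemma rep:
  fixes \<psi> :: "'b::order \<Rightarrow> 'a"
  assumes good: "good_type m n r" and bij: "bij \<psi>"
    and segsA: "\<forall>\<alpha>::'a. countable {\<beta>. \<beta> < \<alpha>}"
    and segs: "\<forall>x :: 'b. countable {y. y < x}"
    and unc: "uncountable (UNIV :: 'a set)"
  shows "\<exists>T. ad_representation (NN_all m n) T (\<lambda>x. AA (\<psi> x))"
proof -
  have inj: "inj \<psi>" using bij bij_is_inj by blast
  have bound: "\<exists>g. \<forall>w. w \<le> x \<longrightarrow> \<psi> w \<le> g" for x
  proof (rule ccontr)
    assume nb: "\<not> (\<exists>g. \<forall>w. w \<le> x \<longrightarrow> \<psi> w \<le> g)"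
    have cD: "countable {w. w \<le> x}"
    proof -
      have "{w. w \<le> x} = insert x {y. y < x}" by auto
      then show ?thesis using segs by simp
    qed
    have "(UNIV :: 'a set) \<subseteq> (\<Union>s\<in>\<psi> ` {w. w \<le> x}. {\<beta>. \<beta> < s})"
    proof
      fix g :: 'a
      obtain w where "w \<le> x" "\<not> \<psi> w \<le> g" using nb by blast
      then show "g \<in> (\<Union>s\<in>\<psi> ` {w. w \<le> x}. {\<beta>. \<beta> < s})" by auto
    qed
    moreover have "countable (\<Union>s\<in>\<psi> ` {w. w \<le> x}. {\<beta>. \<beta> < s})"
      using cD segsA by (intro countable_UN) auto
    ultimately show False using unc countable_subset by blast
  qed
  then obtain \<gamma> where \<gamma>: "\<And>x w. w \<le> x \<Longrightarrow> \<psi> w \<le> \<gamma> x" by metis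
  define U where "U x = \<psi> ` {w. w \<le> x}" for x
  define T' where "T' x = TT (U x) (\<gamma> x)" for x
  define T where "T x = AA (\<psi> x) \<union> T' x" for x
  have Ub: "\<forall>a\<in>U x. a \<le> \<gamma> x" for x unfolding U_def using \<gamma> by auto
  have UI: "U x \<inter> U y = \<psi> ` {w. w \<le> x \<and> w \<le> y}" for x y
    unfolding U_def using inj by (auto simp: inj_eq) 
  have notU: "\<not> y \<le> x \<Longrightarrow> \<psi> y \<notin> U x" for x y unfolding U_def using inj by (auto simp: inj_eq)
  have Afin: "finite (AA (\<psi> x) - T' x)" for x
  proof -
    have "Lo (\<psi> x) (\<gamma> x) \<subseteq> T' x" unfolding T'_def TT_def U_def by auto
    then have "AA (\<psi> x) - T' x \<subseteq> AA (\<psi> x) - Lo (\<psi> x) (\<gamma> x)" by blast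
    then show ?thesis by (rule finite_subset) (rule AF_Lo)
  qed
  have Bfin: "\<not> y \<le> x \<Longrightarrow> finite (AA (\<psi> y) \<inter> T x)" for x y
  proof -
    assume nyx: "\<not> y \<le> x"
    then have "\<psi> y \<noteq> \<psi> x" using inj by (auto simp: inj_eq)
    then have f1: "finite (AA (\<psi> y) \<inter> AA (\<psi> x))" by (rule AD)
    have f2: "finite (AA (\<psi> y) \<inter> T' x)" unfolding T'_def by (rule TT_B[OF Ub notU[OF nyx]])
    have "AA (\<psi> y) \<inter> T x \<subseteq> (AA (\<psi> y) \<inter> AA (\<psi> x)) \<union> (AA (\<psi> y) \<inter> T' x)" unfolding T_def by blast
    then show ?thesis by (rule finite_subset) (use f1 f2 in blast)
  qed
  have Pfin: "finite (T x \<inter> T y - TT (U x \<inter> U y) (\<gamma> x))" for x y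
  proof -
    have sub: "T x \<inter> T y - TT (U x \<inter> U y) (\<gamma> x) \<subseteq> (AA (\<psi> x) - T' x) \<union> (AA (\<psi> y) - T' y) \<union>
        (T' x \<inter> T' y - TT (U x \<inter> U y) (\<gamma> x))" unfolding T_def by blast
    have f: "finite (T' x \<inter> T' y - TT (U x \<inter> U y) (\<gamma> x))"
      unfolding T'_def by (rule TT_P[OF Ub Ub])
    show ?thesis by (rule finite_subset[OF sub]) (intro finite_UnI Afin f)
  qed
  have Sfin: "z \<le> x \<Longrightarrow> finite (T z - T' x)" for x z
  proof -
    assume zx: "z \<le> x"
    have "U z \<subseteq> U x" unfolding U_def using zx order_trans by auto
    then have f: "finite (T' z - T' x)" unfolding T'_def by (rule TT_S[OF Ub])
    have sub: "T z - T' x \<subseteq> (AA (\<psi> z) - T' z) \<union> (T' z - T' x)" unfolding T_def by blast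
    show ?thesis by (rule finite_subset[OF sub]) (intro finite_UnI Afin f)
  qed
  have TsubT': "T' x \<subseteq> T x" for x unfolding T_def by blast
  have "ad_representation (NN_all m n) T (\<lambda>x. AA (\<psi> x))"
    unfolding ad_representation_def
  proof (intro conjI allI impI)
    show "countable (NN_all m n)" by (rule NN_all_count)
    fix x
    show "T x \<subseteq> NN_all m n" unfolding T_def T'_def using AF_sub TT_sub by blast
    show "infinite (T x)" unfolding T_def using AF_inf[OF good] by auto
    show "AA (\<psi> x) \<subseteq> NN_all m n" by (rule AF_sub)
    show "infinite (AA (\<psi> x))" using AF_inf[OF good] by auto
    show "AA (\<psi> x) \<subseteq> T x" unfolding T_def by blast
  next
    show "inj (\<lambda>x. AA (\<psi> x))"
    proof (rule injI)
      fix x y assume eq: "AA (\<psi> x) = AA (\<psi> y)"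
      show "x = y"
      proof (rule ccontr)
        assume "x \<noteq> y"
        then have "\<psi> x \<noteq> \<psi> y" using inj by (auto simp: inj_eq)
        then have "finite (AA (\<psi> x) \<inter> AA (\<psi> y))" by (rule AD)
        then show False using eq AF_inf[OF good] by simp
      qed
    qed
  next
    fix x y :: 'b
    assume "x \<noteq> y"
    then have "\<psi> x \<noteq> \<psi> y" using inj by (auto simp: inj_eq)
    then show "finite (AA (\<psi> x) \<inter> AA (\<psi> y))" by (rule AD)
  next
    fix x y :: 'b
    assume nyx: "\<not> y \<le> x"
    have "AA (\<psi> y) - (T y - T x) \<subseteq> AA (\<psi> y) \<inter> T x" unfolding T_def by blast
    then show "finite (AA (\<psi> y) - (T y - T x))" by (rule finite_subset) (rule Bfin[OF nyx])
  next
    fix x y z :: 'b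
    assume inf: "is_inf x y z"
    have zx: "z \<le> x" and zy: "z \<le> y" and zmax: "\<And>w. w \<le> x \<Longrightarrow> w \<le> y \<Longrightarrow> w \<le> z"
      using inf unfolding is_inf_def by auto
    have "U x \<inter> U y \<subseteq> U z" unfolding UI by (unfold U_def) (rule image_mono, use zmax in auto)
    then have f1: "finite (TT (U x \<inter> U y) (\<gamma> x) - T' z)" unfolding T'_def
      by (rule TT_S[rotated]) (use Ub in blast)
    have "T x \<inter> T y - T z \<subseteq> (T x \<inter> T y - TT (U x \<inter> U y) (\<gamma> x)) \<union> (TT (U x \<inter> U y) (\<gamma> x) - T' z)"
      using TsubT'[of z] by blast
    then have a1: "finite (T x \<inter> T y - T z)" by (rule finite_subset) (intro finite_UnI Pfin f1)
    have "T z - T x \<inter> T y \<subseteq> (T z - T' x) \<union> (T z - T' y)" using TsubT' by blast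
    then have a2: "finite (T z - T x \<inter> T y)" by (rule finite_subset) (intro finite_UnI Sfin[OF zx] Sfin[OF zy])
    show "almost_eq (T x \<inter> T y) (T z)" unfolding almost_eq_def using a1 a2 by blast
  next
    fix x :: 'b
    assume sl: "successor_like x"
    define P where "P = pred_set x"
    have finP: "finite P" using sl unfolding successor_like_def P_def by blast
    have Pl: "z \<in> P \<Longrightarrow> z < x" for z unfolding P_def pred_set_def by blast
    have cov: "w < x \<Longrightarrow> \<exists>z\<in>P. w \<le> z" for w using sl unfolding successor_like_def P_def by blast
    have "(T x - (\<Union>z\<in>P. T z)) - AA (\<psi> x) \<subseteq> (\<Union>z\<in>P. TT (U z) (\<gamma> x) - T' z)"
    proof
      fix p assume p: "p \<in> (T x - (\<Union>z\<in>P. T z)) - AA (\<psi> x)"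
      then have "p \<in> T' x" unfolding T_def by blast
      then obtain w where w: "w \<le> x" "p \<in> Lo (\<psi> w) (\<gamma> x)" unfolding T'_def TT_def U_def by blast
      have "w \<noteq> x" using w(2) p Lo_sub by blast
      then have "w < x" using w(1) by simp
      then obtain z where z: "z \<in> P" "w \<le> z" using cov by blast
      have "p \<in> TT (U z) (\<gamma> x)" unfolding TT_def U_def using z w by blast
      moreover have "p \<notin> T' z" using p z TsubT'[of z] by blast
      ultimately show "p \<in> (\<Union>z\<in>P. TT (U z) (\<gamma> x) - T' z)" using z by blast
    qed
    moreover have "finite (\<Union>z\<in>P. TT (U z) (\<gamma> x) - T' z)"
    proof (rule finite_UN_I[OF finP])
      fix z assume z: "z \<in> P"
      have "\<forall>a\<in>U z. a \<le> \<gamma> x" unfolding U_def using Pl[OF z] \<gamma> order_trans less_imp_le by blast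
      then show "finite (TT (U z) (\<gamma> x) - T' z)" unfolding T'_def by (rule TT_S) simp
    qed
    ultimately have b1: "finite ((T x - (\<Union>z\<in>P. T z)) - AA (\<psi> x))" by (rule finite_subset)
    have AT: "AA (\<psi> x) \<subseteq> T x" unfolding T_def by blast
    have "AA (\<psi> x) - (T x - (\<Union>z\<in>P. T z)) \<subseteq> (\<Union>z\<in>P. AA (\<psi> x) \<inter> T z)" using AT by blast
    moreover have "finite (\<Union>z\<in>P. AA (\<psi> x) \<inter> T z)"
    proof (rule finite_UN_I[OF finP])
      fix z assume "z \<in> P"
      then have "\<not> x \<le> z" using Pl by (meson leD)
      then show "finite (AA (\<psi> x) \<inter> T z)" by (rule Bfin)
    qed
    ultimately have b2: "finite (AA (\<psi> x) - (T x - (\<Union>z\<in>P. T z)))" by (rule finite_subset)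
    show "almost_eq (T x - (\<Union>z\<in>pred_set x. T z)) (AA (\<psi> x))"
      unfolding almost_eq_def using b1 b2 unfolding P_def by blast
  next
    fix x y :: 'b
    assume inc: "incompatible x y"
    have "U x \<inter> U y = {}" unfolding UI using inc unfolding incompatible_def by auto
    then have "TT (U x \<inter> U y) (\<gamma> x) = {}" unfolding TT_def by simp
    then show "finite (T x \<inter> T y)" using Pfin[of x y] by simp
  qed
  then show ?thesis by blast
qed

end

theorem mainTheorem12:
  fixes FF :: "'a::wellorder set set" and m n r :: "nat \<Rightarrow> nat"
  assumes omega1: "uncountable (UNIV :: 'a set)" "\<forall>\<alpha>::'a. countable {\<beta>. \<beta> < \<alpha>}"
    and scheme: "construction_scheme FF m n r" and good: "good_type m n r"
    and wf: "wfP ((<) :: 'b::order \<Rightarrow> 'b \<Rightarrow> bool)"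
    and size: "\<exists>f :: 'b \<Rightarrow> 'a. bij f"
    and segs: "\<forall>x :: 'b. countable {y. y < x}"
  shows "\<exists>(\<psi> :: 'b \<Rightarrow> 'a) T. bij \<psi> \<and> ad_representation (NN_all m n) T (\<lambda>x. AF FF m n r (\<psi> x))"
proof -
  have infU: "infinite (UNIV :: 'a set)" using omega1(1) countable_finite by blast
  interpret C: CS FF m n r by unfold_locales (rule scheme, rule infU)
  obtain \<psi> :: "'b \<Rightarrow> 'a" where b: "bij \<psi>" using size by blast
  obtain T where "ad_representation (NN_all m n) T (\<lambda>x. AF FF m n r (\<psi> x))"
    using C.rep[OF good b omega1(2) segs omega1(1)] by blast
  then show ?thesis using b by blast
qed

end
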